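(* Let $G=(V,E,w)$ be a weighted graph with $n=|V|$ vertices. Let $\mathrm{A}(G)$ be the maximum of \[\tfrac14\,\mathbb{E}_{(\mathbf{u},\mathbf{v})\sim E}\big[1-\langle f_X(\mathbf{u}),f_X(\mathbf{v})\rangle-\langle f_Y(\mathbf{u}),f_Y(\mathbf{v})\rangle-\langle f_Z(\mathbf{u}),f_Z(\mathbf{v})\rangle\big]\] over all $f_X,f_Y,f_Z:V\to S^{3n-1}$ such that $\langle f_P(v),f_Q(v)\rangle=0$ for every $v\in V$ and all distinct $P,Q\in\{X,Y,Z\}$. Then \[\mathrm{A}(G)=\max_{f:V\to S^{n-1}}\mathbb{E}_{(\mathbf{u},\mathbf{v})\sim E}\big[\tfrac14-\tfrac34\langle f(\mathbf{u}),f(\mathbf{v})\rangle\big].\]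
   Context: A weighted graph $G=(V,E,w)$ is a finite undirected graph with nonnegative edge weights summing to $1$; $(\mathbf{u},\mathbf{v})\sim E$ is a random edge drawn according to the weights. $S^{m-1}$ is the unit sphere of $\mathbb{R}^m$. *)

theory Defs
  imports "HOL-Analysis.Analysis"
begin

text \<open>A weighted graph on the finite vertex type 'v: weights w u v on ordered pairs,
  nonnegative, symmetric (undirected), summing to 1. The random edge (u,v) ~ E is
  the pair (u,v) drawn with probability w u v.\<close>

definition weighted_graph :: "('v::finite \<Rightarrow> 'v \<Rightarrow> real) \<Rightarrow> bool" where
  "weighted_graph w \<longleftrightarrow> (\<forall>u v. 0 \<le> w u v) \<and> (\<forall>u v. w u v = w v u)
     \<and> (\<Sum>u\<in>UNIV. \<Sum>v\<in>UNIV. w u v) = 1"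

definition edge_exp :: "('v::finite \<Rightarrow> 'v \<Rightarrow> real) \<Rightarrow> ('v \<Rightarrow> 'v \<Rightarrow> real) \<Rightarrow> real" where
  "edge_exp w F = (\<Sum>u\<in>UNIV. \<Sum>v\<in>UNIV. w u v * F u v)"

text \<open>A(G): vectors in S^{3n-1} are unit vectors of real^('v \<times> 3), of dimension 3n.\<close>

definition A_val :: "('v::finite \<Rightarrow> 'v \<Rightarrow> real) \<Rightarrow> real" where
  "A_val w = Sup {1/4 * edge_exp w (\<lambda>u v. 1 - fX u \<bullet> fX v - fY u \<bullet> fY v - fZ u \<bullet> fZ v) |
       (fX :: 'v \<Rightarrow> real^('v \<times> 3)) fY fZ.
       (\<forall>v. fX v \<in> sphere 0 1 \<and> fY v \<in> sphere 0 1 \<and> fZ v \<in> sphere 0 1) \<and>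
       (\<forall>v. fX v \<bullet> fY v = 0 \<and> fX v \<bullet> fZ v = 0 \<and> fY v \<bullet> fZ v = 0)}"

end

theory Submission
  imports Defs
begin

lemma edge_exp_affine:
  assumes "weighted_graph w"
  shows "edge_exp w (\<lambda>u v. a + b * F u v) = a + b * edge_exp w F"
proof -
  have "edge_exp w (\<lambda>u v. a + b * F u v)
      = a * (\<Sum>u\<in>UNIV. \<Sum>v\<in>UNIV. w u v) + b * edge_exp w F"
    unfolding edge_exp_def
    by (simp add: distrib_left sum.distrib sum_distrib_left algebra_simps)
  then show ?thesis using assms unfolding weighted_graph_def by simp
qed

lemma edge_exp_add:
  "edge_exp w (\<lambda>u v. F u v + G u v) = edge_exp w F + edge_exp w G"
  unfolding edge_exp_def by (simp add: distrib_left sum.distrib)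

lemma edge_exp_mono:
  assumes "weighted_graph w" "\<And>u v. F u v \<le> G u v"
  shows "edge_exp w F \<le> edge_exp w G"
  unfolding edge_exp_def
  using assms unfolding weighted_graph_def
  by (intro sum_mono mult_left_mono) auto

lemma embed:
  fixes g :: "'v::finite \<Rightarrow> real^'n"
  shows "\<exists>h::'v \<Rightarrow> real^'v. \<forall>u v. h u \<bullet> h v = g u \<bullet> g v"
proof -
  let ?S = "span (range g)"
  have "dim ?S \<le> card (range g)"
    by (simp add: dim_span dim_le_card')
  also have "\<dots> \<le> CARD('v)" by (simp add: card_image_le)
  also have "\<dots> = dim (UNIV :: (real^'v) set)" by simp
  finally have d: "dim ?S \<le> dim (UNIV :: (real^'v) set)" .
  obtain f :: "real^'n \<Rightarrow> real^'v" where f: "linear f" "\<And>x. x \<in> ?S \<Longrightarrow> norm (f x) = norm x"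
    using isometry_subset_subspace[OF subspace_span subspace_UNIV d] by metis
  have ip: "f x \<bullet> f y = x \<bullet> y" if "x \<in> ?S" "y \<in> ?S" for x y
  proof -
    have xy: "x + y \<in> ?S" using that by (simp add: span_add)
    have "norm (f (x + y))^2 = norm (x+y)^2" using f(2)[OF xy] by simp
    moreover have "f (x + y) = f x + f y" using f(1) by (simp add: linear_add)
    ultimately have "norm (f x + f y)^2 = norm (x+y)^2" by simp
    moreover have "norm (f x)^2 = norm x ^2" "norm (f y)^2 = norm y^2" using f(2) that by auto
    ultimately show ?thesis
      by (simp add: power2_norm_eq_inner inner_add_left inner_add_right inner_commute)
  qed
  show ?thesis
  proof (intro exI allI)
    fix u v
    show "(f \<circ> g) u \<bullet> (f \<circ> g) v = g u \<bullet> g v"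
      using ip[of "g u" "g v"] by (simp add: span_base)
  qed
qed

definition emb :: "3 \<Rightarrow> real^'v \<Rightarrow> real^('v \<times> 3)" where
  "emb c x = (\<chi> p. if snd p = c then x $ fst p else 0)"

lemma inner_emb:
  fixes x y :: "real^'v::finite"
  shows "emb c x \<bullet> emb d y = (if c = d then x \<bullet> y else 0)"
proof -
  have "emb c x \<bullet> emb d y = (\<Sum>p\<in>UNIV.
      (if snd p = c then x $ fst p else 0) * (if snd p = d then y $ fst p else 0))"
    unfolding emb_def inner_vec_def by simp
  also have "\<dots> = (\<Sum>p\<in>UNIV \<times> UNIV.
      (if snd p = c then x $ fst p else 0) * (if snd p = d then y $ fst p else 0))"
    by (simp only: UNIV_Times_UNIV)
  also have "\<dots> = (\<Sum>i\<in>UNIV. \<Sum>k\<in>UNIV.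
      (if k = c then x $ i else 0) * (if k = d then y $ i else 0))"
    by (simp add: sum.cartesian_product case_prod_unfold)
  also have "\<dots> = (\<Sum>i\<in>UNIV. if c = d then x $ i * y $ i else 0)"
  proof (intro sum.cong refl)
    fix i
    have e: "\<And>k. (if k = c then x $ i else 0) * (if k = d then y $ i else 0)
        = (if k = c then (if c = d then x $ i * y $ i else 0) else (0::real))" by auto
    show "(\<Sum>k\<in>UNIV. (if k = c then x $ i else 0) * (if k = d then y $ i else 0))
        = (if c = d then x $ i * y $ i else 0)"
      unfolding e by (simp add: sum.delta)
  qed
  also have "\<dots> = (if c = d then x \<bullet> y else 0)"
    by (simp add: inner_vec_def)
  finally show ?thesis .
qed

lemma norm_emb: "norm (emb c (x::real^'v::finite)) = norm x"
  by (simp add: norm_eq_sqrt_inner inner_emb)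

theorem proposition7p4:
  fixes w :: "'v::finite \<Rightarrow> 'v \<Rightarrow> real"
  assumes "weighted_graph w"
  shows "A_val w = Sup {edge_exp w (\<lambda>u v. 1/4 - 3/4 * (f u \<bullet> f v)) |
                          (f :: 'v \<Rightarrow> real^'v). \<forall>v. f v \<in> sphere 0 1}"
proof -
  define S1 where "S1 = {1/4 * edge_exp w (\<lambda>u v. 1 - fX u \<bullet> fX v - fY u \<bullet> fY v - fZ u \<bullet> fZ v) |
       (fX :: 'v \<Rightarrow> real^('v \<times> 3)) fY fZ.
       (\<forall>v. fX v \<in> sphere 0 1 \<and> fY v \<in> sphere 0 1 \<and> fZ v \<in> sphere 0 1) \<and>
       (\<forall>v. fX v \<bullet> fY v = 0 \<and> fX v \<bullet> fZ v = 0 \<and> fY v \<bullet> fZ v = 0)}"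
  define S2 where "S2 = {edge_exp w (\<lambda>u v. 1/4 - 3/4 * (f u \<bullet> f v)) |
                          (f :: 'v \<Rightarrow> real^'v). \<forall>v. f v \<in> sphere 0 1}"
  have A: "A_val w = Sup S1" unfolding A_val_def S1_def by simp
  have one: "edge_exp w (\<lambda>u v. 1) = 1"
    using edge_exp_affine[OF assms, of 1 0 "\<lambda>u v. 0"] by simp
  have bdd2: "bdd_above S2"
  proof (rule bdd_aboveI[of _ 1])
    fix y assume "y \<in> S2"
    then obtain f :: "'v \<Rightarrow> real^'v" where f: "\<forall>v. f v \<in> sphere 0 1"
      and y: "y = edge_exp w (\<lambda>u v. 1/4 - 3/4 * (f u \<bullet> f v))" unfolding S2_def by blast
    have "\<bar>f u \<bullet> f v\<bar> \<le> 1" for u v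
      using Cauchy_Schwarz_ineq2[of "f u" "f v"] f by simp
    then have "1/4 - 3/4 * (f u \<bullet> f v) \<le> 1" for u v
      using abs_le_D2[of "f u \<bullet> f v" 1] by fastforce
    then have "y \<le> edge_exp w (\<lambda>u v. 1)" unfolding y
      by (intro edge_exp_mono[OF assms])
    then show "y \<le> 1" using one by simp
  qed
  have ne2: "S2 \<noteq> {}"
  proof -
    define f0 where "f0 = (\<lambda>_::'v. axis undefined 1 :: real^'v)"
    have "\<forall>v. f0 v \<in> sphere 0 1" by (simp add: f0_def norm_axis_1)
    then have "edge_exp w (\<lambda>u v. 1/4 - 3/4 * (f0 u \<bullet> f0 v)) \<in> S2"
      unfolding S2_def by blast
    then show ?thesis by blast
  qed
  have sub: "S2 \<subseteq> S1"
  proof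
    fix y assume "y \<in> S2"
    then obtain f :: "'v \<Rightarrow> real^'v" where f: "\<forall>v. f v \<in> sphere 0 1"
      and y: "y = edge_exp w (\<lambda>u v. 1/4 - 3/4 * (f u \<bullet> f v))" unfolding S2_def by blast
    define fX where "fX = (\<lambda>v. emb 1 (f v))"
    define fY where "fY = (\<lambda>v. emb 2 (f v))"
    define fZ where "fZ = (\<lambda>v. emb 3 (f v))"
    have "y = 1/4 * edge_exp w (\<lambda>u v. 1 - fX u \<bullet> fX v - fY u \<bullet> fY v - fZ u \<bullet> fZ v)"
      unfolding y fX_def fY_def fZ_def inner_emb edge_exp_def
      by (simp add: sum_distrib_left algebra_simps)
    moreover have "\<forall>v. fX v \<in> sphere 0 1 \<and> fY v \<in> sphere 0 1 \<and> fZ v \<in> sphere 0 1"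
      using f by (simp add: fX_def fY_def fZ_def norm_emb)
    moreover have "\<forall>v. fX v \<bullet> fY v = 0 \<and> fX v \<bullet> fZ v = 0 \<and> fY v \<bullet> fZ v = 0"
      by (simp add: fX_def fY_def fZ_def inner_emb)
    ultimately show "y \<in> S1" unfolding S1_def by blast
  qed
  have gen: "\<exists>y\<in>S2. y = 1/4 - 3/4 * edge_exp w (\<lambda>u v. g u \<bullet> g v)"
    if g: "\<forall>v. norm (g v) = 1" for g :: "'v \<Rightarrow> real^('v \<times> 3)"
  proof -
    obtain h :: "'v \<Rightarrow> real^'v" where h: "\<forall>u v. h u \<bullet> h v = g u \<bullet> g v"
      using embed by blast
    have "\<forall>v. h v \<in> sphere 0 1"
      using h g by (simp add: norm_eq_sqrt_inner)
    moreover have "edge_exp w (\<lambda>u v. 1/4 - 3/4 * (h u \<bullet> h v))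
        = 1/4 - 3/4 * edge_exp w (\<lambda>u v. g u \<bullet> g v)"
      using edge_exp_affine[OF assms, of "1/4" "-3/4" "\<lambda>u v. g u \<bullet> g v"] h by simp
    ultimately show ?thesis unfolding S2_def by blast
  qed
  have dom: "\<exists>y\<in>S2. x \<le> y" if "x \<in> S1" for x
  proof -
    obtain fX fY fZ :: "'v \<Rightarrow> real^('v \<times> 3)" where
      sp: "\<forall>v. fX v \<in> sphere 0 1 \<and> fY v \<in> sphere 0 1 \<and> fZ v \<in> sphere 0 1"
      and x: "x = 1/4 * edge_exp w (\<lambda>u v. 1 - fX u \<bullet> fX v - fY u \<bullet> fY v - fZ u \<bullet> fZ v)"
      using \<open>x \<in> S1\<close> unfolding S1_def by blast
    define aX where "aX = edge_exp w (\<lambda>u v. fX u \<bullet> fX v)"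
    define aY where "aY = edge_exp w (\<lambda>u v. fY u \<bullet> fY v)"
    define aZ where "aZ = edge_exp w (\<lambda>u v. fZ u \<bullet> fZ v)"
    have "edge_exp w (\<lambda>u v. 1 - fX u \<bullet> fX v - fY u \<bullet> fY v - fZ u \<bullet> fZ v)
        = edge_exp w (\<lambda>u v. 1 + (-1) * (fX u \<bullet> fX v + fY u \<bullet> fY v + fZ u \<bullet> fZ v))"
      by (simp add: algebra_simps)
    also have "\<dots> = 1 + (-1) * edge_exp w (\<lambda>u v. fX u \<bullet> fX v + fY u \<bullet> fY v + fZ u \<bullet> fZ v)"
      by (rule edge_exp_affine[OF assms])
    also have "\<dots> = 1 - (aX + aY + aZ)"
      unfolding aX_def aY_def aZ_def by (simp only: edge_exp_add) simp
    finally have x': "x = 1/4 * (1 - (aX + aY + aZ))" using x by simp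
    obtain yX where yX: "yX \<in> S2" "yX = 1/4 - 3/4 * aX" using gen[of fX] sp aX_def by auto
    obtain yY where yY: "yY \<in> S2" "yY = 1/4 - 3/4 * aY" using gen[of fY] sp aY_def by auto
    obtain yZ where yZ: "yZ \<in> S2" "yZ = 1/4 - 3/4 * aZ" using gen[of fZ] sp aZ_def by auto
    show ?thesis
    proof (cases "aX \<le> aY \<and> aX \<le> aZ")
      case True then show ?thesis using yX x' by (intro bexI[of _ yX]) auto
    next
      case False
      show ?thesis
      proof (cases "aY \<le> aZ")
        case True then show ?thesis using False yY x' by (intro bexI[of _ yY]) auto
      next
        case False2: False
        then show ?thesis using False yZ x' by (intro bexI[of _ yZ]) auto
      qed
    qed
  qed
  have ne1: "S1 \<noteq> {}" using ne2 sub by blast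
  have bdd1: "bdd_above S1"
  proof -
    obtain M where M: "\<forall>y\<in>S2. y \<le> M" using bdd2 by (auto simp: bdd_above_def)
    show ?thesis
    proof (rule bdd_aboveI[of _ M])
      fix x assume "x \<in> S1"
      then obtain y where "y \<in> S2" "x \<le> y" using dom by blast
      then show "x \<le> M" using M by force
    qed
  qed
  have "Sup S1 \<le> Sup S2"
  proof (rule cSup_least[OF ne1])
    fix x assume "x \<in> S1"
    then obtain y where "y \<in> S2" "x \<le> y" using dom by blast
    then show "x \<le> Sup S2" using cSup_upper[OF _ bdd2] by force
  qed
  moreover have "Sup S2 \<le> Sup S1" by (rule cSup_subset_mono[OF ne2 bdd1 sub])
  ultimately show ?thesis unfolding A S2_def[symmetric] by linarith
qed

end
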